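(* Let $(X,T)$ be a uniquely ergodic topological dynamical system with unique invariant probability measure $\mu$, and assume the measure-preserving system $(X,\mu,T)$ is mixing. Let $U\subset X$ be open with $0<\mu(U)\le\mu(\overline U)<1$, let $x_0\in X$ and let $A=\{n\in\mathbb{N}\colon T^nx_0\in U\}$. Then $d^*(A)>0$, and there do not exist $B\subset\mathbb{N}$ with $d^*(B)>0$ and an infinite set $C\subset\mathbb{N}$ with $B+C\subset A$.
   Context: A topological dynamical system $(X,T)$ is a compact metric space $X$ with a continuous surjection $T\colon X\to X$. Convention: $\mathbb{N}=\{0,1,2,\dots\}$. For $A\subset\mathbb{N}$, $d^*(A)=\lim_{N\to\infty}\sup_{M\in\mathbb{N}}\frac{|A\cap[M,M+N)|}{N}$. $B+C=\{b+c\colon b\in B,\ c\in C\}$. *)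

theory Defs
  imports "HOL-Probability.Probability"
begin

definition tds :: "'a::metric_space set \<Rightarrow> ('a \<Rightarrow> 'a) \<Rightarrow> bool" where
  "tds X T \<longleftrightarrow> compact X \<and> continuous_on X T \<and> T ` X = X"

definition invariant_prob :: "'a::metric_space set \<Rightarrow> ('a \<Rightarrow> 'a) \<Rightarrow> 'a measure \<Rightarrow> bool" where
  "invariant_prob X T \<mu> \<longleftrightarrow> prob_space \<mu> \<and> sets \<mu> = sets (restrict_space borel X) \<and>
     space \<mu> = X \<and> T \<in> measurable \<mu> \<mu> \<and> distr \<mu> \<mu> T = \<mu>"

definition uniquely_ergodic_with :: "'a::metric_space set \<Rightarrow> ('a \<Rightarrow> 'a) \<Rightarrow> 'a measure \<Rightarrow> bool" where
  "uniquely_ergodic_with X T \<mu> \<longleftrightarrow> invariant_prob X T \<mu> \<and> (\<forall>\<nu>. invariant_prob X T \<nu> \<longrightarrow> \<nu> = \<mu>)"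

definition mixing :: "'a measure \<Rightarrow> ('a \<Rightarrow> 'a) \<Rightarrow> bool" where
  "mixing \<mu> T \<longleftrightarrow> (\<forall>A\<in>sets \<mu>. \<forall>B\<in>sets \<mu>.
     (\<lambda>n. measure \<mu> (A \<inter> ((T ^^ n) -` B \<inter> space \<mu>))) \<longlonglongrightarrow> measure \<mu> A * measure \<mu> B)"

definition upper_banach_density :: "nat set \<Rightarrow> real" where
  "upper_banach_density A =
     lim (\<lambda>N. SUP M. real (card (A \<inter> {M..<M+N})) / real N)"

definition sumset :: "nat set \<Rightarrow> nat set \<Rightarrow> nat set" where
  "sumset B C = {b + c | b c. b \<in> B \<and> c \<in> C}"

end

theory Submission
  imports Defs "HOL-Library.Diagonal_Subsequence"
begin

definition gfun :: "'a::metric_space set \<Rightarrow> nat \<Rightarrow> 'a \<Rightarrow> real" where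
  "gfun F m x = max 0 (1 - real m * infdist x F)"

lemma gfun_cont: "continuous_on S (gfun F m)"
  unfolding gfun_def by (intro continuous_intros)

lemma gfun_bounds: "0 \<le> gfun F m x" "gfun F m x \<le> 1"
  unfolding gfun_def using infdist_nonneg[of x F] by auto

lemma gfun_ge_ind: "indicator F x \<le> gfun F m x"
  using infdist_nonneg[of x F] by (cases "x \<in> F") (auto simp: gfun_def)

lemma gfun_lim:
  fixes F :: "'a::metric_space set"
  assumes "closed F" "F \<noteq> {}"
  shows "(\<lambda>m. gfun F m x) \<longlonglongrightarrow> indicator F x"
proof (cases "x \<in> F")
  case True
  then show ?thesis by (simp add: gfun_def indicator_def infdist_zero)
next
  case False
  then have d: "infdist x F > 0" using infdist_pos_not_in_closed assms by blast
  obtain m0 :: nat where "m0 * infdist x F > 1" using reals_Archimedean3[OF d] by blast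
  then have "\<forall>m\<ge>m0. gfun F m x = 0"
  proof (intro allI impI)
    fix m assume "m \<ge> m0" "m0 * infdist x F > 1"
    then have "real m * infdist x F \<ge> m0 * infdist x F" using d by (intro mult_right_mono) auto
    then show "gfun F m x = 0" using \<open>m0 * infdist x F > 1\<close> by (simp add: gfun_def)
  qed
  then have "eventually (\<lambda>m. gfun F m x = 0) sequentially" by (auto simp: eventually_sequentially)
  then show ?thesis using False by (simp add: tendsto_eventually)
qed

lemma closed_approx:
  fixes M :: "'a::metric_space measure"
  assumes "finite_measure M" "sets M = sets (restrict_space borel X)" "closed F" "F \<subseteq> X" "F \<noteq> {}"
  shows "(\<lambda>m. integral\<^sup>L M (gfun F m)) \<longlonglongrightarrow> measure M F"
proof -
  interpret finite_measure M by fact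
  have FM: "F \<in> sets M" using assms by (auto simp: sets_restrict_space intro!: image_eqI[where x=F] borel_closed)
  have "(\<lambda>m. integral\<^sup>L M (gfun F m)) \<longlonglongrightarrow> integral\<^sup>L M (indicator F)"
  proof (rule integral_dominated_convergence[where w="\<lambda>_. 1"])
    show "indicator F \<in> borel_measurable M" using FM by simp
    show "gfun F i \<in> borel_measurable M" for i
      using measurable_cong_sets[OF assms(2) refl] borel_measurable_continuous_on_restrict[OF gfun_cont] by blast
    show "integrable M (\<lambda>_. 1::real)" by simp
    show "AE x in M. (\<lambda>i. gfun F i x) \<longlonglongrightarrow> indicator F x" using gfun_lim[OF assms(3,5)] by simp
    show "AE x in M. norm (gfun F i x) \<le> 1" for i
      using gfun_bounds[of F i] by (intro always_eventually) (simp add: abs_le_iff)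
  qed
  then show ?thesis using FM by simp
qed

lemma meas_eq_cont:
  fixes M1 M2 :: "'a::metric_space measure"
  assumes "finite_measure M1" "finite_measure M2" "closed X"
    and s1: "sets M1 = sets (restrict_space borel X)" and s2: "sets M2 = sets (restrict_space borel X)"
    and eq: "\<And>h::'a\<Rightarrow>real. continuous_on X h \<Longrightarrow> integral\<^sup>L M1 h = integral\<^sup>L M2 h"
  shows "M1 = M2"
proof -
  let ?E = "(\<inter>) X ` {S. closed S}"
  have sig: "sets (restrict_space borel X) = sigma_sets X ?E"
  proof -
    have "sets (restrict_space borel X) = (\<inter>) X ` sets borel" by (simp add: sets_restrict_space)
    also have "sets borel = sigma_sets UNIV {S. closed S}" by (simp add: borel_eq_closed)
    also have "(\<inter>) X ` sigma_sets UNIV {S. closed S} = sigma_sets X ?E"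
      by (rule sigma_sets_Int) (use assms(3) in \<open>auto intro: sigma_sets.Basic[of X UNIV]\<close>)
    finally show ?thesis .
  qed
  have sp: "space M1 = X" "space M2 = X"
    using sets_eq_imp_space_eq[OF s1] sets_eq_imp_space_eq[OF s2] by (auto simp: space_restrict_space)
  show ?thesis
  proof (rule measure_eqI_generator_eq[where E="?E" and \<Omega>=X and A="\<lambda>_. X"])
    show "Int_stable ?E"
    proof (rule Int_stableI)
      fix a b assume "a \<in> ?E" "b \<in> ?E"
      then obtain c d where "closed c" "closed d" "a = X \<inter> c" "b = X \<inter> d" by auto
      then show "a \<inter> b \<in> ?E" by (intro image_eqI[where x="c \<inter> d"]) auto
    qed
    show "?E \<subseteq> Pow X" by auto
    show "sets M1 = sigma_sets X ?E" "sets M2 = sigma_sets X ?E" using s1 s2 sig by auto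
    show "range (\<lambda>_. X) \<subseteq> ?E" by (auto intro!: image_eqI[where x=UNIV])
    show "\<Union> (range (\<lambda>_. X)) = X" by simp
    show "emeasure M1 X \<noteq> \<infinity>" for i::nat using finite_measure.emeasure_finite[OF assms(1)] by simp
    fix A assume "A \<in> ?E"
    then obtain C where C: "closed C" "A = X \<inter> C" by auto
    then have cA: "closed A" "A \<subseteq> X" using assms(3) by auto
    show "emeasure M1 A = emeasure M2 A"
    proof (cases "A = {}")
      case True then show ?thesis by simp
    next
      case False
      have "(\<lambda>m. integral\<^sup>L M1 (gfun A m)) \<longlonglongrightarrow> measure M1 A"
        using closed_approx[OF assms(1) s1 cA False] .
      moreover have "(\<lambda>m. integral\<^sup>L M1 (gfun A m)) \<longlonglongrightarrow> measure M2 A"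
        using closed_approx[OF assms(2) s2 cA False] eq[OF gfun_cont] by simp
      ultimately have "measure M1 A = measure M2 A" by (rule LIMSEQ_unique)
      moreover have "A \<in> sets M1" "A \<in> sets M2" using cA s1 s2 by (auto simp: sets_restrict_space intro!: image_eqI[where x=A] borel_closed)
      ultimately show ?thesis using assms(1,2)
        by (simp add: finite_measure.emeasure_eq_measure)
    qed
  qed
qed



locale kb =
  fixes X :: "'a::metric_space set" and T :: "'a \<Rightarrow> 'a" and y :: "nat \<Rightarrow> 'a" and N :: "nat \<Rightarrow> nat"
  assumes cX: "compact X" and neX: "X \<noteq> {}" and cT: "continuous_on X T" and TX: "T ` X \<subseteq> X"
    and yX: "\<And>j. y j \<in> X" and Npos: "\<And>j. N j > 0" and Nlim: "filterlim N at_top sequentially"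
begin

definition rad :: "nat \<Rightarrow> real" where "rad m = 1 / real (Suc m)"

lemma rad_pos: "rad m > 0" by (simp add: rad_def)

definition net :: "nat \<Rightarrow> 'a list" where
  "net m = (SOME l. set l \<subseteq> X \<and> X \<subseteq> (\<Union>q\<in>set l. ball q (rad m)))"

lemma net: "set (net m) \<subseteq> X \<and> X \<subseteq> (\<Union>q\<in>set (net m). ball q (rad m))"
proof -
  obtain t where t: "t \<subseteq> X" "finite t" "X \<subseteq> \<Union>((\<lambda>q. ball q (rad m)) ` t)"
  proof (rule compactE_image[OF cX, of X "\<lambda>q. ball q (rad m)"])
    show "X \<subseteq> (\<Union>q\<in>X. ball q (rad m))" using rad_pos by force
  qed auto
  then obtain l where "set l = t" using finite_list by blast
  then have "\<exists>l. set l \<subseteq> X \<and> X \<subseteq> (\<Union>q\<in>set l. ball q (rad m))" using t by blast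
  then show ?thesis unfolding net_def by (rule someI_ex)
qed

lemma net_ne: "length (net m) > 0"
  using net[of m] neX by auto

definition ix :: "nat \<Rightarrow> 'a \<Rightarrow> nat" where
  "ix m x = (LEAST i. i < length (net m) \<and> dist x (net m ! i) < rad m)"

lemma ix: assumes "x \<in> X" shows "ix m x < length (net m)" "dist x (net m ! ix m x) < rad m"
proof -
  obtain q where "q \<in> set (net m)" "dist x q < rad m" using net[of m] assms by (auto simp: dist_commute)
  then obtain i where "i < length (net m) \<and> dist x (net m ! i) < rad m" by (auto simp: in_set_conv_nth)
  then have "ix m x < length (net m) \<and> dist x (net m ! ix m x) < rad m"
    unfolding ix_def by (rule LeastI)
  then show "ix m x < length (net m)" "dist x (net m ! ix m x) < rad m" by auto
qed

definition code :: "nat \<Rightarrow> 'a \<Rightarrow> nat list" where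
  "code k x = map (\<lambda>m. ix m x) [0..<k]"

lemma length_code[simp]: "length (code k x) = k" by (simp add: code_def)
lemma code_Suc: "code (Suc k) x = code k x @ [ix k x]" by (simp add: code_def)
lemma code_take: "m \<le> k \<Longrightarrow> take m (code k x) = code m x"
  by (simp add: code_def take_map)

definition cellset :: "nat list \<Rightarrow> 'a set" where
  "cellset s = {x\<in>X. code (length s) x = s}"

lemma cellset_nil[simp]: "cellset [] = X" by (simp add: cellset_def code_def)

lemma in_cellset_code: "x \<in> X \<Longrightarrow> x \<in> cellset (code k x)" by (simp add: cellset_def)

lemma cellset_take: "x \<in> cellset s \<Longrightarrow> m \<le> length s \<Longrightarrow> x \<in> cellset (take m s)"
  by (auto simp: cellset_def code_take[symmetric] min_def)

lemma cellset_diam: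
  assumes "x \<in> cellset s" "z \<in> cellset s" "length s = Suc k"
  shows "dist x z < 2 * rad k"
proof -
  have xz: "x \<in> X" "z \<in> X" "code (Suc k) x = s" "code (Suc k) z = s" using assms by (auto simp: cellset_def)
  then have "ix k x = ix k z" using code_Suc[of k x] code_Suc[of k z] by auto
  then have "dist x (net k ! ix k x) < rad k" "dist z (net k ! ix k x) < rad k" using ix(2)[OF xz(1), of k] ix(2)[OF xz(2), of k] by metis+
  then show ?thesis using dist_triangle2[of x z "net k ! ix k x"] by auto
qed

primrec codes :: "nat \<Rightarrow> nat list set" where
  "codes 0 = {[]}"
| "codes (Suc k) = (\<lambda>(s,i). s @ [i]) ` (codes k \<times> {..<length (net k)})"

lemma finite_codes: "finite (codes k)" by (induction k) auto

lemma codes_length: "s \<in> codes k \<Longrightarrow> length s = k" by (induction k arbitrary: s) auto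

lemma code_in_codes: "x \<in> X \<Longrightarrow> code k x \<in> codes k"
  by (induction k) (auto simp: code_Suc ix code_def)

lemma codes_Suc_iff: "s @ [i] \<in> codes (Suc k) \<longleftrightarrow> s \<in> codes k \<and> i < length (net k)"
  by auto

lemma cellset_split:
  assumes "s \<in> codes k"
  shows "indicator (cellset s) x = (\<Sum>i<length (net k). indicator (cellset (s @ [i])) x :: real)"
proof (cases "x \<in> cellset s")
  case True
  then have x: "x \<in> X" "code k x = s" using codes_length[OF assms] by (auto simp: cellset_def)
  have "(\<Sum>i<length (net k). indicator (cellset (s @ [i])) x :: real)
      = (\<Sum>i<length (net k). if i = ix k x then 1 else 0)"
    using x codes_length[OF assms] by (intro sum.cong) (auto simp: cellset_def code_Suc indicator_def)
  also have "\<dots> = 1" using ix(1)[OF x(1)] by simp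
  finally show ?thesis using True by simp
next
  case False
  then have "x \<notin> cellset (s @ [i])" for i
    using cellset_take[of x "s @ [i]" "length s"] by auto
  then show ?thesis using False by simp
qed

lemma codes_cover:
  assumes "x \<in> X"
  shows "(\<Sum>s\<in>codes k. indicator (cellset s) x :: real) = 1"
proof -
  have "(\<Sum>s\<in>codes k. indicator (cellset s) x :: real) = (\<Sum>s\<in>codes k. if s = code k x then 1 else 0)"
    using assms by (intro sum.cong) (auto simp: cellset_def indicator_def codes_length)
  also have "\<dots> = 1" using code_in_codes[OF assms] finite_codes by simp
  finally show ?thesis .
qed

end


context kb begin

definition avg :: "nat \<Rightarrow> ('a \<Rightarrow> real) \<Rightarrow> real" where
  "avg j h = (\<Sum>n<N j. h ((T ^^ n) (y j))) / real (N j)"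

lemma funpow_in: "x \<in> X \<Longrightarrow> (T ^^ n) x \<in> X"
  by (induction n) (use TX in auto)

lemma orb_in: "(T ^^ n) (y j) \<in> X" using funpow_in yX by blast

lemma avg_sum: "finite I \<Longrightarrow> avg j (\<lambda>x. \<Sum>i\<in>I. f i x) = (\<Sum>i\<in>I. avg j (f i))"
  unfolding avg_def by (subst sum.swap) (simp add: sum_divide_distrib)

lemma avg_ind_bounds: "0 \<le> avg j (indicator A)" "avg j (indicator A) \<le> 1"
proof -
  have "(\<Sum>n<N j. indicator A ((T ^^ n) (y j)) :: real) \<le> (\<Sum>n<N j. 1)"
    by (intro sum_mono) (auto simp: indicator_def)
  then show "0 \<le> avg j (indicator A)" "avg j (indicator A) \<le> 1"
    using Npos[of j] by (auto simp: avg_def sum_nonneg divide_le_eq)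
qed

lemma avg_X: "avg j (indicator X) = 1"
  using Npos[of j] orb_in by (simp add: avg_def)

lemma ex_sub: "\<exists>r. strict_mono r \<and> (\<forall>s. convergent (\<lambda>j. avg (r j) (indicator (cellset s))))"
proof -
  define P where "P = (\<lambda>n (r::nat\<Rightarrow>nat). convergent (\<lambda>j. avg (r j) (indicator (cellset (from_nat n :: nat list)))))"
  interpret subseqs P
  proof
    fix n and s :: "nat \<Rightarrow> nat" assume "strict_mono s"
    have "range (\<lambda>j. avg (s j) (indicator (cellset (from_nat n :: nat list)))) \<subseteq> {0..1}"
      using avg_ind_bounds by auto
    then have "bounded (range (\<lambda>j. avg (s j) (indicator (cellset (from_nat n :: nat list)))))"
      by (rule bounded_subset[rotated]) simp
    then obtain l r where "strict_mono r"
      "((\<lambda>j. avg (s j) (indicator (cellset (from_nat n :: nat list)))) \<circ> r) \<longlonglongrightarrow> l"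
      using bounded_imp_convergent_subsequence by blast
    then show "\<exists>r'. strict_mono r' \<and> P n (s \<circ> r')"
      unfolding P_def by (auto simp: convergent_def o_def)
  qed
  have "P k (diagseq \<circ> (+) (Suc k))" for k
    by (rule diagseq_holds) (auto simp: P_def o_def intro: convergent_subseq_convergent[unfolded o_def])
  have "P k diagseq" for k
  proof -
    define F where "F = (\<lambda>m. avg m (indicator (cellset (from_nat k :: nat list))))"
    have "convergent (\<lambda>j. F (diagseq (Suc k + j)))" using \<open>P k (diagseq \<circ> (+) (Suc k))\<close>
      by (simp add: P_def F_def o_def)
    then have "convergent (\<lambda>j. F (diagseq (j + Suc k)))" by (simp add: add.commute)
    then have "convergent (\<lambda>j. F (diagseq j))"
      using convergent_ignore_initial_segment[where m="Suc k" and f="\<lambda>j. F (diagseq j)"] by simp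
    then show ?thesis by (simp add: P_def F_def)
  qed
  then have "convergent (\<lambda>j. avg (diagseq j) (indicator (cellset s)))" for s
    unfolding P_def using from_nat_to_nat[of s] by metis
  then show ?thesis using subseq_diagseq by blast
qed

definition rr :: "nat \<Rightarrow> nat" where
  "rr = (SOME r. strict_mono r \<and> (\<forall>s. convergent (\<lambda>j. avg (r j) (indicator (cellset s)))))"

lemma rr: "strict_mono rr" "convergent (\<lambda>j. avg (rr j) (indicator (cellset s)))"
  using someI_ex[OF ex_sub] unfolding rr_def by auto

definition w :: "nat list \<Rightarrow> real" where
  "w s = lim (\<lambda>j. avg (rr j) (indicator (cellset s)))"

lemma w_lim: "(\<lambda>j. avg (rr j) (indicator (cellset s))) \<longlonglongrightarrow> w s"
  using rr(2) unfolding w_def by (simp add: convergent_LIMSEQ_iff)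

lemma w_nonneg: "0 \<le> w s"
  using w_lim[of s] avg_ind_bounds by (intro LIMSEQ_le_const) auto

lemma w_nil: "w [] = 1"
  using w_lim[of "[]"] avg_X by (simp add: LIMSEQ_const_iff)

lemma w_split: "s \<in> codes k \<Longrightarrow> w s = (\<Sum>i<length (net k). w (s @ [i]))"
proof -
  assume s: "s \<in> codes k"
  have e: "indicator (cellset s) = (\<lambda>x. \<Sum>i<length (net k). indicator (cellset (s @ [i])) x :: real)"
    by (rule ext) (rule cellset_split[OF s])
  have "avg j (indicator (cellset s)) = (\<Sum>i<length (net k). avg j (indicator (cellset (s @ [i]))))" for j
    using avg_sum[of "{..<length (net k)}" j "\<lambda>i. indicator (cellset (s @ [i]))"]
    by (subst e) simp
  then have "(\<lambda>j. avg (rr j) (indicator (cellset s))) \<longlonglongrightarrow> (\<Sum>i<length (net k). w (s @ [i]))"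
    by (simp only:) (intro tendsto_sum w_lim)
  then show ?thesis using w_lim LIMSEQ_unique by blast
qed

lemma w_pos_ne: "w s > 0 \<Longrightarrow> cellset s \<noteq> {}"
  using w_lim[of s] by (auto simp: avg_def LIMSEQ_const_iff)

definition start :: "nat list \<Rightarrow> real" where
  "start s = (\<Sum>m<length s. \<Sum>i'<s ! m. w (take m s @ [i']))"

lemma start_nil[simp]: "start [] = 0" by (simp add: start_def)

lemma start_snoc: "start (s @ [i]) = start s + (\<Sum>i'<i. w (s @ [i']))"
proof -
  have "start (s @ [i]) = (\<Sum>m<length s. \<Sum>i'<(s@[i]) ! m. w (take m (s@[i]) @ [i'])) + (\<Sum>i'<i. w (s @ [i']))"
    by (simp add: start_def)
  also have "(\<Sum>m<length s. \<Sum>i'<(s@[i]) ! m. w (take m (s@[i]) @ [i'])) = start s"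
    unfolding start_def by (intro sum.cong) (auto simp: nth_append)
  finally show ?thesis .
qed

lemma codes_SucE:
  assumes "s \<in> codes (Suc k)"
  obtains s0 i where "s = s0 @ [i]" "s0 \<in> codes k" "i < length (net k)"
  using assms by auto

lemma start_bounds: "s \<in> codes k \<Longrightarrow> 0 \<le> start s \<and> start s + w s \<le> 1"
proof (induction k arbitrary: s)
  case 0 then show ?case by (simp add: w_nil)
next
  case (Suc k)
  then obtain s0 i where s: "s = s0 @ [i]" "s0 \<in> codes k" "i < length (net k)" by (auto elim: codes_SucE)
  have "start s + w s = start s0 + (\<Sum>i'<Suc i. w (s0 @ [i']))" by (simp add: s start_snoc)
  also have "\<dots> \<le> start s0 + (\<Sum>i'<length (net k). w (s0 @ [i']))"
    using s(3) w_nonneg by (intro add_left_mono sum_mono2) auto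
  also have "\<dots> = start s0 + w s0" using w_split[OF s(2)] by simp
  finally have "start s + w s \<le> 1" using Suc.IH[OF s(2)] by simp
  moreover have "0 \<le> start s" using Suc.IH[OF s(2)]
    by (auto simp: s start_snoc intro!: add_nonneg_nonneg sum_nonneg w_nonneg)
  ultimately show ?case by simp
qed

primrec path :: "nat \<Rightarrow> real \<Rightarrow> nat list" where
  "path 0 t = []"
| "path (Suc k) t = path k t @ [LEAST i. t < start (path k t) + (\<Sum>i'<Suc i. w (path k t @ [i']))]"

lemma path_inv:
  assumes "t \<in> {0..<1}"
  shows "path k t \<in> codes k \<and> start (path k t) \<le> t \<and> t < start (path k t) + w (path k t)"
proof (induction k)
  case 0 then show ?case using assms by (simp add: w_nil)
next
  case (Suc k)
  define s where "s = path k t"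
  define L where "L = length (net k)"
  define Q where "Q = (\<lambda>i. t < start s + (\<Sum>i'<Suc i. w (s @ [i'])))"
  define i where "i = (LEAST i. Q i)"
  have IH: "s \<in> codes k" "start s \<le> t" "t < start s + w s" using Suc by (auto simp: s_def)
  have L: "L > 0" using net_ne by (simp add: L_def)
  have SL: "Suc (L - 1) = L" using L by simp
  have "Q (L - 1)" unfolding Q_def by (subst SL) (use IH w_split[OF IH(1)] in \<open>simp add: L_def\<close>)
  then have Qi: "Q i" and iL: "i \<le> L - 1" unfolding i_def by (auto intro: LeastI Least_le)
  have lo: "start s + (\<Sum>i'<i. w (s @ [i'])) \<le> t"
  proof (cases i)
    case 0 then show ?thesis using IH by simp
  next
    case (Suc i0)
    then have "\<not> Q i0" using not_less_Least[of i0 Q] by (simp add: i_def)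
    then show ?thesis using Suc by (simp add: Q_def)
  qed
  have ps: "path (Suc k) t = s @ [i]" by (simp add: s_def i_def Q_def)
  have "s @ [i] \<in> codes (Suc k)"
    by (rule codes_Suc_iff[THEN iffD2]) (use IH iL L in \<open>auto simp: L_def less_eq_Suc_le\<close>)
  then show ?case using IH iL L Qi lo unfolding ps
    by (auto simp: start_snoc Q_def L_def)
qed

lemma path_char:
  assumes "s \<in> codes k" "t \<in> {0..<1}"
  shows "path k t = s \<longleftrightarrow> start s \<le> t \<and> t < start s + w s"
proof
  assume "path k t = s" then show "start s \<le> t \<and> t < start s + w s" using path_inv[OF assms(2)] by auto
next
  assume "start s \<le> t \<and> t < start s + w s"
  with assms(1) show "path k t = s"
  proof (induction k arbitrary: s)
    case 0 then show ?case by simp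
  next
    case (Suc k)
    then obtain s0 i where s: "s = s0 @ [i]" "s0 \<in> codes k" "i < length (net k)" by (auto elim: codes_SucE)
    have b: "start s0 + (\<Sum>i'<i. w (s0 @ [i'])) \<le> t" "t < start s0 + (\<Sum>i'<Suc i. w (s0 @ [i']))"
      using Suc.prems by (auto simp: s start_snoc)
    have "start s0 + (\<Sum>i'<Suc i. w (s0 @ [i'])) \<le> start s0 + (\<Sum>i'<length (net k). w (s0 @ [i']))"
      using s(3) w_nonneg by (intro add_left_mono sum_mono2) auto
    also have "\<dots> = start s0 + w s0" using w_split[OF s(2)] by simp
    finally have "start s0 \<le> t \<and> t < start s0 + w s0"
      using b w_nonneg by (smt (verit) sum_nonneg)
    then have p0: "path k t = s0" using Suc.IH[OF s(2)] by blast
    have "(LEAST i'. t < start s0 + (\<Sum>i''<Suc i'. w (s0 @ [i'']))) = i"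
    proof (rule Least_equality)
      show "t < start s0 + (\<Sum>i''<Suc i. w (s0 @ [i'']))" using b by simp
      fix i' assume ti: "t < start s0 + (\<Sum>i''<Suc i'. w (s0 @ [i'']))"
      show "i \<le> i'"
      proof (rule ccontr)
        assume "\<not> i \<le> i'"
        then have "(\<Sum>i''<Suc i'. w (s0 @ [i''])) \<le> (\<Sum>i''<i. w (s0 @ [i'']))"
          using w_nonneg by (intro sum_mono2) auto
        then show False using b ti by simp
      qed
    qed
    then show ?case using p0 s by simp
  qed
qed

end


context kb begin

definition pt :: "nat list \<Rightarrow> 'a" where "pt s = (SOME x. x \<in> cellset s)"

lemma pt_in: "cellset s \<noteq> {} \<Longrightarrow> pt s \<in> cellset s"
  unfolding pt_def by (rule someI_ex) auto

lemma length_path[simp]: "length (path k t) = k" by (induction k) auto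

lemma path_take: "m \<le> k \<Longrightarrow> take m (path k t) = path m t"
proof (induction k)
  case 0 then show ?case by simp
next
  case (Suc k)
  then show ?case by (cases "m = Suc k") (auto simp: take_append)
qed

lemma w_path_pos: "t \<in> {0..<1} \<Longrightarrow> w (path k t) > 0"
  using path_inv[of t k] by auto

lemma pt_path_in: "t \<in> {0..<1} \<Longrightarrow> pt (path k t) \<in> cellset (path k t)"
  using pt_in w_pos_ne w_path_pos by blast

lemma cellset_path_mono: "t \<in> {0..<1} \<Longrightarrow> m \<le> k \<Longrightarrow> x \<in> cellset (path k t) \<Longrightarrow> x \<in> cellset (path m t)"
  using cellset_take[of x "path k t" m] path_take[of m k t] by simp

lemma cellset_sub: "cellset s \<subseteq> X" by (auto simp: cellset_def)

lemma pt_close: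
  assumes "t \<in> {0..<1}" "x \<in> cellset (path (Suc k) t)" "m \<ge> Suc k"
  shows "dist (pt (path m t)) x < 2 * rad k"
  using cellset_diam[of "pt (path m t)" "path (Suc k) t" x k] assms
    cellset_path_mono[OF assms(1) assms(3) pt_path_in[OF assms(1)]] by simp

lemma rad_small: "e > 0 \<Longrightarrow> \<exists>k. 2 * rad k < e"
proof -
  assume e: "e > 0"
  obtain n :: nat where n: "2 / e < real n" using reals_Archimedean2 by blast
  then have "2 < e * real n" using e by (simp add: field_simps)
  also have "\<dots> < e * real (Suc n)" using e by simp
  finally have "2 * rad n < e" using e by (simp add: rad_def field_simps)
  then show ?thesis by blast
qed

definition phi :: "real \<Rightarrow> 'a" where
  "phi t = (if t \<in> {0..<1} then lim (\<lambda>m. pt (path m t)) else y 0)"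

lemma phi_lim:
  assumes t: "t \<in> {0..<1}"
  shows "(\<lambda>m. pt (path m t)) \<longlonglongrightarrow> phi t" "phi t \<in> X"
proof -
  have inX: "\<forall>m. pt (path m t) \<in> X" using pt_path_in[OF t] cellset_sub by blast
  have "Cauchy (\<lambda>m. pt (path m t))"
  proof (rule metric_CauchyI)
    fix e :: real assume "e > 0"
    then obtain k where k: "2 * rad k < e" using rad_small by blast
    show "\<exists>M. \<forall>m\<ge>M. \<forall>n\<ge>M. dist (pt (path m t)) (pt (path n t)) < e"
    proof (intro exI allI impI)
      fix m n assume "Suc k \<le> m" "Suc k \<le> n"
      then have "dist (pt (path m t)) (pt (path n t)) < 2 * rad k"
        using pt_close[OF t cellset_path_mono[OF t \<open>Suc k \<le> n\<close> pt_path_in[OF t]]] by simp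
      then show "dist (pt (path m t)) (pt (path n t)) < e" using k by simp
    qed
  qed
  note C = this
  have comp: "\<forall>f. (\<forall>n. f n \<in> X) \<and> Cauchy f \<longrightarrow> (\<exists>l\<in>X. f \<longlonglongrightarrow> l)"
    using compact_imp_complete[OF cX] by (simp add: complete_def)
  have "\<exists>l\<in>X. (\<lambda>m. pt (path m t)) \<longlonglongrightarrow> l" using comp[rule_format, of "\<lambda>m. pt (path m t)"] C inX by blast
  then obtain l where l: "l \<in> X" "(\<lambda>m. pt (path m t)) \<longlonglongrightarrow> l" by blast
  then have "phi t = l" using t by (simp add: phi_def limI)
  then show "(\<lambda>m. pt (path m t)) \<longlonglongrightarrow> phi t" "phi t \<in> X" using l by auto
qed

lemma phi_X: "phi t \<in> X"
  using phi_lim(2) yX by (cases "t \<in> {0..<1}") (auto simp: phi_def)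

lemma phi_close:
  assumes t: "t \<in> {0..<1}" and x: "x \<in> cellset (path (Suc k) t)"
  shows "dist (phi t) x \<le> 2 * rad k"
proof (rule LIMSEQ_le_const2)
  show "(\<lambda>m. dist (pt (path m t)) x) \<longlonglongrightarrow> dist (phi t) x"
    by (intro tendsto_intros phi_lim(1)[OF t])
  show "\<exists>N. \<forall>m\<ge>N. dist (pt (path m t)) x \<le> 2 * rad k"
    using pt_close[OF t x] by (intro exI[of _ "Suc k"]) (auto intro: less_imp_le)
qed

definition P :: "real measure" where "P = restrict_space lborel {0..<1}"

lemma space_P[simp]: "space P = {0..<1}" by (simp add: P_def space_restrict_space)

lemma prob_P: "prob_space P"
proof
  show "emeasure P (space P) = 1"
    by (simp add: P_def emeasure_restrict_space)
qed

lemma set_path_eq: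
  assumes "s \<in> codes k"
  shows "{t \<in> space P. path k t = s} = {start s..<start s + w s}"
proof -
  have "t \<in> {t \<in> space P. path k t = s} \<longleftrightarrow> t \<in> {start s..<start s + w s}" for t
    using path_char[OF assms, of t] start_bounds[OF assms] by (cases "t \<in> {0..<1}") auto
  then show ?thesis by blast
qed

lemma ind_path:
  assumes "s \<in> codes k" "t \<in> {0..<1}"
  shows "indicator {start s..<start s + w s} t = (if path k t = s then 1 else (0::real))"
  using path_char[OF assms] by (simp add: indicator_def)

lemma sets_P_Ico: "0 \<le> a \<Longrightarrow> b \<le> 1 \<Longrightarrow> {a..<b} \<in> sets P"
  by (auto simp: P_def sets_restrict_space_iff)

lemma path_meas: "path k \<in> measurable P (count_space UNIV)"
proof (rule measurable_count_space_eq2_countable[THEN iffD2], intro conjI ballI)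
  show "path k \<in> space P \<rightarrow> UNIV" by simp
  fix s :: "nat list" assume "s \<in> UNIV"
  show "path k -` {s} \<inter> space P \<in> sets P"
  proof (cases "s \<in> codes k")
    case True
    have "path k -` {s} \<inter> space P = {t \<in> space P. path k t = s}" by blast
    also have "\<dots> = {start s..<start s + w s}" by (rule set_path_eq[OF True])
    finally have "path k -` {s} \<inter> space P = {start s..<start s + w s}" .
    then show ?thesis using start_bounds[OF True] sets_P_Ico[of "start s" "start s + w s"] by simp
  next
    case False
    have "path k -` {s} \<inter> space P = {}"
    proof (rule equals0I)
      fix t assume "t \<in> path k -` {s} \<inter> space P"
      then have "t \<in> {0..<1}" "path k t = s" by auto
      then show False using path_inv[of t k] False by blast
    qed
    then show ?thesis by simp
  qed
qed

lemma phik_meas: "(\<lambda>t. pt (path k t)) \<in> borel_measurable P"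
  using measurable_compose[OF path_meas, of pt borel] by (simp add: measurable_count_space)

lemma phi_meas: "phi \<in> measurable P (restrict_space borel X)"
proof (rule measurable_restrict_space2)
  show "phi \<in> space P \<rightarrow> X" using phi_X by auto
  show "phi \<in> borel_measurable P"
    by (rule borel_measurable_LIMSEQ_metric[where f="\<lambda>i t. pt (path i t)", OF phik_meas]) (use phi_lim in auto)
qed

definition nu :: "'a measure" where "nu = distr P (restrict_space borel X) phi"

lemma prob_nu: "prob_space nu"
  unfolding nu_def by (intro prob_space.prob_space_distr prob_P phi_meas)

lemma sets_nu: "sets nu = sets (restrict_space borel X)" by (simp add: nu_def)
lemma space_nu: "space nu = X" by (simp add: nu_def space_restrict_space)

lemma measure_P_Ico: "0 \<le> a \<Longrightarrow> a \<le> b \<Longrightarrow> b \<le> 1 \<Longrightarrow> measure P {a..<b} = b - a"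
proof -
  assume a: "0 \<le> a" "a \<le> b" "b \<le> 1"
  have "measure P {a..<b} = measure lborel {a..<b}" using a by (simp add: P_def measure_restrict_space)
  also have "\<dots> = b - a" using a by (simp add: measure_def)
  finally show ?thesis .
qed

lemma integral_phik:
  fixes g :: "'a \<Rightarrow> real"
  shows "integral\<^sup>L P (\<lambda>t. g (pt (path k t))) = (\<Sum>s\<in>codes k. g (pt s) * w s)"
proof -
  interpret prob_space P by (rule prob_P)
  have I: "{start s..<start s + w s} \<in> sets P" if "s \<in> codes k" for s
    using start_bounds[OF that] sets_P_Ico w_nonneg[of s] by auto
  have "integral\<^sup>L P (\<lambda>t. g (pt (path k t))) =
      integral\<^sup>L P (\<lambda>t. \<Sum>s\<in>codes k. g (pt s) * indicator {start s..<start s + w s} t)"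
  proof (rule Bochner_Integration.integral_cong[OF refl])
    fix t assume t: "t \<in> space P"
    have "(\<Sum>s\<in>codes k. g (pt s) * indicator {start s..<start s + w s} t) =
        (\<Sum>s\<in>codes k. if path k t = s then g (pt s) else 0)"
      by (rule sum.cong[OF refl]) (use t in \<open>simp add: ind_path\<close>)
    also have "\<dots> = g (pt (path k t))"
      using path_inv[of t k] t finite_codes[of k] by (simp add: sum.delta)
    finally show "g (pt (path k t)) = (\<Sum>s\<in>codes k. g (pt s) * indicator {start s..<start s + w s} t)" ..
  qed
  also have "\<dots> = (\<Sum>s\<in>codes k. integral\<^sup>L P (\<lambda>t. g (pt s) * indicator {start s..<start s + w s} t))"
    by (rule Bochner_Integration.integral_sum) (use I in \<open>auto intro!: integrable_mult_right integrable_real_indicator simp: less_top[symmetric]\<close>)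
  also have "\<dots> = (\<Sum>s\<in>codes k. g (pt s) * w s)"
  proof (rule sum.cong[OF refl])
    fix s assume s: "s \<in> codes k"
    have "integral\<^sup>L P (\<lambda>t. g (pt s) * indicator {start s..<start s + w s} t) =
        g (pt s) * measure P {start s..<start s + w s}"
    proof -
      have sub: "{start s..<start s + w s} \<subseteq> {0..<1}" using start_bounds[OF s] by auto
      have "integral\<^sup>L P (indicator {start s..<start s + w s}) = measure P {start s..<start s + w s}"
        using Bochner_Integration.integral_indicator[of P "{start s..<start s + w s}"] by (simp only: space_P Int_absorb2[OF sub])
      then show ?thesis by (simp only: integral_mult_right_zero)
    qed
    also have "\<dots> = g (pt s) * w s"
      using measure_P_Ico[of "start s" "start s + w s"] start_bounds[OF s] w_nonneg[of s] by simp
    finally show "integral\<^sup>L P (\<lambda>t. g (pt s) * indicator {start s..<start s + w s} t) = g (pt s) * w s" .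
  qed
  finally show ?thesis .
qed

end


lemma prob_int_close:
  fixes f g :: "'b \<Rightarrow> real"
  assumes "prob_space M" "integrable M f" "integrable M g" "\<And>x. x \<in> space M \<Longrightarrow> \<bar>f x - g x\<bar> \<le> c"
  shows "\<bar>integral\<^sup>L M f - integral\<^sup>L M g\<bar> \<le> c"
proof -
  interpret prob_space M by fact
  have le: "f x \<le> g x + c" "g x \<le> f x + c" if "x \<in> space M" for x
    using assms(4)[OF that] by (simp_all add: abs_le_iff)
  have "integral\<^sup>L M f \<le> integral\<^sup>L M (\<lambda>x. g x + c)"
    using assms le by (intro integral_mono_AE AE_I2) auto
  moreover have "integral\<^sup>L M g \<le> integral\<^sup>L M (\<lambda>x. f x + c)"
    using assms le by (intro integral_mono_AE AE_I2) auto
  ultimately show ?thesis using assms by (simp add: abs_le_iff prob_space)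
qed

context kb begin

lemma avg_cmult: "avg j (\<lambda>x. c * f x) = c * avg j f"
  unfolding avg_def by (simp add: sum_distrib_left)

lemma avg_diff: "avg j (\<lambda>x. f x - g x) = avg j f - avg j g"
  unfolding avg_def by (simp add: sum_subtractf diff_divide_distrib)

lemma avg_abs_le:
  assumes "\<And>x. x \<in> X \<Longrightarrow> \<bar>f x\<bar> \<le> e"
  shows "\<bar>avg j f\<bar> \<le> e"
proof -
  have "\<bar>\<Sum>n<N j. f ((T ^^ n) (y j))\<bar> \<le> (\<Sum>n<N j. \<bar>f ((T ^^ n) (y j))\<bar>)" by (rule sum_abs)
  also have "\<dots> \<le> (\<Sum>n<N j. e)" using assms orb_in by (intro sum_mono) auto
  finally show ?thesis using Npos[of j] by (simp add: avg_def divide_le_eq mult.commute)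
qed

lemma cont_bounded: "continuous_on X h \<Longrightarrow> \<exists>B. \<forall>x\<in>X. \<bar>h x :: real\<bar> \<le> B"
proof -
  assume "continuous_on X h"
  then have "bounded (h ` X)" using compact_imp_bounded[OF compact_continuous_image[OF _ cX]] by blast
  then obtain a where "\<forall>z\<in>h ` X. \<bar>z\<bar> \<le> a" unfolding bounded_real by blast
  then show ?thesis by auto
qed

lemma sum_code:
  assumes "x \<in> X"
  shows "(\<Sum>s\<in>codes k. g s * indicator (cellset s) x) = (g (code k x) :: real)"
proof -
  have "(\<Sum>s\<in>codes k. g s * indicator (cellset s) x) = (\<Sum>s\<in>codes k. if code k x = s then g s else 0)"
    using assms by (intro sum.cong) (auto simp: cellset_def indicator_def codes_length)
  also have "\<dots> = g (code k x)" using code_in_codes[OF assms] finite_codes by simp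
  finally show ?thesis .
qed

lemma avg_conv:
  assumes h: "continuous_on X h"
  shows "(\<lambda>j. avg (rr j) h) \<longlonglongrightarrow> integral\<^sup>L nu h"
proof (unfold lim_sequentially, intro allI impI)
  fix e :: real assume e: "e > 0"
  interpret P: prob_space P by (rule prob_P)
  obtain B where B: "\<forall>x\<in>X. \<bar>h x\<bar> \<le> B" using cont_bounded[OF h] by blast
  have "uniformly_continuous_on X h" using compact_uniformly_continuous[OF h cX] .
  then obtain d where d: "d > 0" "\<And>x x'. x \<in> X \<Longrightarrow> x' \<in> X \<Longrightarrow> dist x' x < d \<Longrightarrow> \<bar>h x' - h x\<bar> < e/4"
    unfolding uniformly_continuous_on_def dist_real_def using e
    by (metis divide_pos_pos zero_less_numeral)
  obtain k0 where k0: "2 * rad k0 < d" using rad_small[OF d(1)] by blast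
  define k where "k = Suc k0"
  define S where "S = (\<Sum>s\<in>codes k. h (pt s) * w s)"
  have hm: "h \<in> borel_measurable (restrict_space borel X)" using h by (rule borel_measurable_continuous_on_restrict)
  have a: "\<bar>integral\<^sup>L nu h - S\<bar> \<le> e/4"
  proof -
    have "integral\<^sup>L nu h = integral\<^sup>L P (\<lambda>t. h (phi t))"
      unfolding nu_def by (rule integral_distr[OF phi_meas hm])
    moreover have "S = integral\<^sup>L P (\<lambda>t. h (pt (path k t)))" by (simp add: S_def integral_phik)
    moreover have "\<bar>integral\<^sup>L P (\<lambda>t. h (phi t)) - integral\<^sup>L P (\<lambda>t. h (pt (path k t)))\<bar> \<le> e/4"
    proof (rule prob_int_close[OF prob_P])
      show "integrable P (\<lambda>t. h (phi t))"
      proof (rule P.integrable_const_bound[where B=B])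
        show "AE t in P. norm (h (phi t)) \<le> B" using B phi_X by auto
        show "(\<lambda>t. h (phi t)) \<in> borel_measurable P" using measurable_compose[OF phi_meas hm] .
      qed
      show "integrable P (\<lambda>t. h (pt (path k t)))"
      proof (rule P.integrable_const_bound[where B=B])
        show "AE t in P. norm (h (pt (path k t))) \<le> B"
        proof (rule AE_I2)
          fix t assume "t \<in> space P"
          then have "pt (path k t) \<in> X" using pt_path_in[of t k] cellset_sub by auto
          then show "norm (h (pt (path k t))) \<le> B" using B by auto
        qed
        show "(\<lambda>t. h (pt (path k t))) \<in> borel_measurable P"
          using measurable_compose[OF path_meas, of "\<lambda>s. h (pt s)" borel] by (simp add: measurable_count_space)
      qed
      fix t assume t: "t \<in> space P"
      then have t': "t \<in> {0..<1}" by simp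
      have ptin: "pt (path k t) \<in> cellset (path (Suc k0) t)" unfolding k_def by (rule pt_path_in[OF t'])
      have "dist (phi t) (pt (path k t)) < d" using phi_close[OF t' ptin] k0 by simp
      then have "\<bar>h (phi t) - h (pt (path k t))\<bar> < e/4"
        using d(2)[of "pt (path k t)" "phi t"] phi_X ptin cellset_sub by auto
      then show "\<bar>h (phi t) - h (pt (path k t))\<bar> \<le> e/4" by simp
    qed
    ultimately show ?thesis by simp
  qed
  have b: "\<bar>avg j h - (\<Sum>s\<in>codes k. h (pt s) * avg j (indicator (cellset s)))\<bar> \<le> e/4" for j
  proof -
    have "(\<Sum>s\<in>codes k. h (pt s) * avg j (indicator (cellset s))) =
        avg j (\<lambda>x. \<Sum>s\<in>codes k. h (pt s) * indicator (cellset s) x)"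
      by (simp add: avg_sum[OF finite_codes] avg_cmult)
    then have "avg j h - (\<Sum>s\<in>codes k. h (pt s) * avg j (indicator (cellset s))) =
        avg j (\<lambda>x. h x - (\<Sum>s\<in>codes k. h (pt s) * indicator (cellset s) x))"
      by (simp add: avg_diff)
    also have "\<bar>\<dots>\<bar> \<le> e/4"
    proof (rule avg_abs_le)
      fix x assume x: "x \<in> X"
      have c: "x \<in> cellset (code k x)" "pt (code k x) \<in> cellset (code k x)"
        using in_cellset_code[OF x] pt_in by auto
      have "dist x (pt (code k x)) < 2 * rad k0"
        using cellset_diam[OF c] by (simp add: k_def)
      then have "\<bar>h x - h (pt (code k x))\<bar> < e/4"
        using d(2)[of "pt (code k x)" x] k0 c cellset_sub x by (auto simp: dist_commute)
      then show "\<bar>h x - (\<Sum>s\<in>codes k. h (pt s) * indicator (cellset s) x)\<bar> \<le> e/4"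
        using sum_code[OF x, where k=k and g="\<lambda>s. h (pt s)"] by simp
    qed
    finally show ?thesis .
  qed
  have "(\<lambda>j. \<Sum>s\<in>codes k. h (pt s) * avg (rr j) (indicator (cellset s))) \<longlonglongrightarrow> S"
    unfolding S_def by (intro tendsto_sum tendsto_mult_left w_lim)
  then obtain no where no: "\<And>n. n \<ge> no \<Longrightarrow>
      dist (\<Sum>s\<in>codes k. h (pt s) * avg (rr n) (indicator (cellset s))) S < e/4"
    using e unfolding lim_sequentially by (metis divide_pos_pos zero_less_numeral)
  show "\<exists>no. \<forall>n\<ge>no. dist (avg (rr n) h) (integral\<^sup>L nu h) < e"
  proof (intro exI allI impI)
    fix n assume "n \<ge> no"
    then have "\<bar>(\<Sum>s\<in>codes k. h (pt s) * avg (rr n) (indicator (cellset s))) - S\<bar> < e/4"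
      using no by (simp add: dist_real_def)
    then show "dist (avg (rr n) h) (integral\<^sup>L nu h) < e"
      using a b[of "rr n"] e unfolding dist_real_def by linarith
  qed
qed

end


context kb begin

lemma T_meas: "T \<in> measurable (restrict_space borel X) (restrict_space borel X)"
proof (rule measurable_restrict_space2)
  show "T \<in> space (restrict_space borel X) \<rightarrow> X" using TX by (auto simp: space_restrict_space)
  show "T \<in> borel_measurable (restrict_space borel X)" using cT by (rule borel_measurable_continuous_on_restrict)
qed

lemma T_meas_nu: "T \<in> measurable nu nu"
  using T_meas by (simp add: measurable_cong_sets[OF sets_nu sets_nu])

lemma avg_shift:
  assumes h: "continuous_on X h"
  shows "(\<lambda>j. avg (rr j) (\<lambda>x. h (T x)) - avg (rr j) h) \<longlonglongrightarrow> 0"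
proof -
  obtain B where B: "\<forall>x\<in>X. \<bar>h x\<bar> \<le> B" using cont_bounded[OF h] by blast
  have eq: "avg j (\<lambda>x. h (T x)) - avg j h = (h ((T ^^ N j) (y j)) - h (y j)) / real (N j)" for j
  proof -
    have "avg j (\<lambda>x. h (T x)) - avg j h = (\<Sum>n<N j. h ((T ^^ Suc n) (y j)) - h ((T ^^ n) (y j))) / real (N j)"
      unfolding avg_def by (simp add: sum_subtractf diff_divide_distrib)
    also have "\<dots> = (h ((T ^^ N j) (y j)) - h (y j)) / real (N j)"
      by (subst sum_lessThan_telescope[where f="\<lambda>n. h ((T ^^ n) (y j))"]) simp
    finally show ?thesis .
  qed
  have bnd: "\<bar>avg j (\<lambda>x. h (T x)) - avg j h\<bar> \<le> 2 * B / real (N j)" for j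
  proof -
    have "\<bar>h ((T ^^ N j) (y j))\<bar> \<le> B" "\<bar>h (y j)\<bar> \<le> B" using B orb_in yX by auto
    then have "\<bar>h ((T ^^ N j) (y j)) - h (y j)\<bar> \<le> 2 * B"
      using abs_triangle_ineq4[of "h ((T ^^ N j) (y j))" "h (y j)"] by linarith
    then have "\<bar>h ((T ^^ N j) (y j)) - h (y j)\<bar> / real (N j) \<le> 2 * B / real (N j)"
      by (rule divide_right_mono) simp
    then show ?thesis unfolding eq by (simp add: abs_divide)
  qed
  have Nr: "filterlim (\<lambda>j. real (N (rr j))) at_top sequentially"
    using filterlim_compose[OF filterlim_real_sequentially filterlim_compose[OF Nlim filterlim_subseq[OF rr(1)]]]
    by (simp add: o_def)
  have "(\<lambda>j. 2 * B / real (N (rr j))) \<longlonglongrightarrow> 0"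
    by (rule tendsto_divide_0[OF tendsto_const filterlim_at_top_imp_at_infinity[OF Nr]])
  moreover have "eventually (\<lambda>j. norm (avg (rr j) (\<lambda>x. h (T x)) - avg (rr j) h) \<le> 2 * B / real (N (rr j))) sequentially"
    by (intro always_eventually allI) (simp only: real_norm_def bnd)
  ultimately show ?thesis by (rule Lim_null_comparison[rotated])
qed

lemma integral_T:
  fixes h :: "'a \<Rightarrow> real"
  assumes h: "continuous_on X h"
  shows "integral\<^sup>L nu (\<lambda>x. h (T x)) = integral\<^sup>L nu h"
proof -
  have hT: "continuous_on X (\<lambda>x. h (T x))"
    using continuous_on_compose[OF cT continuous_on_subset[OF h TX]] by (simp add: o_def)
  have "(\<lambda>j. avg (rr j) (\<lambda>x. h (T x))) \<longlonglongrightarrow> integral\<^sup>L nu (\<lambda>x. h (T x))" by (rule avg_conv[OF hT])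
  moreover have "(\<lambda>j. avg (rr j) h + (avg (rr j) (\<lambda>x. h (T x)) - avg (rr j) h)) \<longlonglongrightarrow> integral\<^sup>L nu h + 0"
    by (rule tendsto_add[OF avg_conv[OF h] avg_shift[OF h]])
  then have "(\<lambda>j. avg (rr j) (\<lambda>x. h (T x))) \<longlonglongrightarrow> integral\<^sup>L nu h" by simp
  ultimately show ?thesis by (rule LIMSEQ_unique)
qed

lemma nu_invariant: "invariant_prob X T nu"
  unfolding invariant_prob_def
proof (intro conjI)
  show "prob_space nu" by (rule prob_nu)
  show "sets nu = sets (restrict_space borel X)" by (rule sets_nu)
  show "space nu = X" by (rule space_nu)
  show "T \<in> measurable nu nu" by (rule T_meas_nu)
  show "distr nu nu T = nu"
  proof (rule meas_eq_cont)
    show "finite_measure (distr nu nu T)"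
      using prob_space.prob_space_distr[OF prob_nu T_meas_nu] unfolding prob_space_def by blast
    show "finite_measure nu" using prob_nu unfolding prob_space_def by blast
    show "closed X" using cX by (rule compact_imp_closed)
    show "sets (distr nu nu T) = sets (restrict_space borel X)" by (simp add: sets_nu)
    show "sets nu = sets (restrict_space borel X)" by (rule sets_nu)
    fix h :: "'a \<Rightarrow> real" assume h: "continuous_on X h"
    have hm: "h \<in> borel_measurable nu"
      using borel_measurable_continuous_on_restrict[OF h] by (simp add: measurable_cong_sets[OF sets_nu refl])
    show "integral\<^sup>L (distr nu nu T) h = integral\<^sup>L nu h"
      using integral_distr[OF T_meas_nu hm] integral_T[OF h] by simp
  qed
qed

theorem kb_main:
  "\<exists>\<nu> r. invariant_prob X T \<nu> \<and> strict_mono r \<and>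
     (\<forall>h. continuous_on X h \<longrightarrow> (\<lambda>j. avg (r j) h) \<longlonglongrightarrow> integral\<^sup>L \<nu> h)"
  using nu_invariant rr(1) avg_conv by blast

end


lemma sum_ind_card: "(\<Sum>m<(n::nat). indicator F (f m) :: real) = real (card {m. m < n \<and> f m \<in> F})"
proof (induction n)
  case 0 then show ?case by simp
next
  case (Suc n)
  have "{m. m < Suc n \<and> f m \<in> F} = {m. m < n \<and> f m \<in> F} \<union> (if f n \<in> F then {n} else {})"
    by (auto simp: less_Suc_eq)
  then show ?case using Suc by (auto simp: indicator_def)
qed

lemma fekete:
  fixes a :: "nat \<Rightarrow> real"
  assumes sub: "\<And>m n. a (m + n) \<le> a m + a n" and nn: "\<And>n. a n \<ge> 0"
  shows "convergent (\<lambda>n. a n / real n)"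
proof -
  define S where "S = (\<lambda>n. a n / real n) ` {1..}"
  define L where "L = Inf S"
  have bdd: "bdd_below S" unfolding S_def using nn by (intro bdd_belowI[of _ 0]) auto
  have Sne: "S \<noteq> {}" by (auto simp: S_def)
  have low: "L \<le> a n / real n" if "n \<ge> 1" for n
    unfolding L_def using that bdd by (intro cInf_lower) (auto simp: S_def)
  have mult: "a (q * m + r) \<le> real q * a m + a r" for q m r
  proof (induction q)
    case 0 then show ?case by simp
  next
    case (Suc q)
    have "a (Suc q * m + r) = a (m + (q * m + r))" by (simp add: algebra_simps)
    also have "\<dots> \<le> a m + a (q * m + r)" by (rule sub)
    also have "\<dots> \<le> a m + (real q * a m + a r)" using Suc by simp
    finally show ?case by (simp add: algebra_simps)
  qed
  have "(\<lambda>n. a n / real n) \<longlonglongrightarrow> L"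
  proof (unfold lim_sequentially, intro allI impI)
    fix e :: real assume e: "e > 0"
    have "\<exists>x\<in>S. x < L + e/2" unfolding L_def using Sne e by (intro cInf_lessD) auto
    then obtain m where m: "m \<ge> 1" "a m / real m < L + e/2" by (auto simp: S_def)
    define R where "R = (\<Sum>r<m. a r)"
    have R: "a r \<le> R" if "r < m" for r
      unfolding R_def using that nn by (intro member_le_sum) auto
    have R0: "R \<ge> 0" unfolding R_def using nn by (intro sum_nonneg) auto
    obtain n0 :: nat where n0: "R / (e/2) < real n0" using reals_Archimedean2 by blast
    show "\<exists>no. \<forall>n\<ge>no. dist (a n / real n) L < e"
    proof (intro exI[of _ "max n0 1"] allI impI)
      fix n assume n: "max n0 1 \<le> n"
      then have npos: "real n > 0" by simp
      define q where "q = n div m"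
      define r where "r = n mod m"
      have nqr: "n = q * m + r" by (simp add: q_def r_def)
      have rm: "r < m" using m(1) by (simp add: r_def)
      have "a n \<le> real q * a m + R" using mult[of q m r] R[OF rm] nqr by simp
      also have "real q * a m = (real (q * m) / real n) * (a m / real m) * real n"
        using m(1) npos by (simp add: field_simps)
      also have "\<dots> \<le> 1 * (L + e/2) * real n"
      proof -
        have "real (q * m) \<le> real n" using nqr by linarith
        then have "real (q * m) / real n \<le> 1" using npos by simp
        moreover have "0 \<le> a m / real m" using nn by simp
        ultimately have "(real (q * m) / real n) * (a m / real m) \<le> 1 * (L + e/2)"
          using m(2) by (intro mult_mono) auto
        then show ?thesis using npos by (intro mult_right_mono) auto
      qed
      finally have "a n \<le> (L + e/2) * real n + R" by simp
      then have "a n / real n \<le> L + e/2 + R / real n" using npos by (simp add: field_simps)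
      moreover have "R / real n < e/2"
      proof -
        have "R < e/2 * real n0" using n0 e by (simp add: field_simps)
        also have "\<dots> \<le> e/2 * real n" using n e by (intro mult_left_mono) auto
        finally show ?thesis using npos by (simp add: field_simps)
      qed
      moreover have "L \<le> a n / real n" using low n by simp
      ultimately show "dist (a n / real n) L < e" unfolding dist_real_def abs_less_iff by linarith
    qed
  qed
  then show ?thesis by (auto simp: convergent_def)
qed

definition dens :: "nat set \<Rightarrow> nat \<Rightarrow> real" where
  "dens A N = (SUP M. real (card (A \<inter> {M..<M+N})) / real N)"

lemma dens_bdd: "bdd_above (range (\<lambda>M. real (card (A \<inter> {M..<M+N})) / real N))"
proof (rule bdd_aboveI[of _ 1])
  fix x assume "x \<in> range (\<lambda>M. real (card (A \<inter> {M..<M+N})) / real N)"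
  then obtain M where x: "x = real (card (A \<inter> {M..<M+N})) / real N" by auto
  have "card (A \<inter> {M..<M+N}) \<le> card {M..<M+N}" by (intro card_mono) auto
  then have "card (A \<inter> {M..<M+N}) \<le> N" by simp
  then show "x \<le> 1" unfolding x by (cases "N = 0") (auto simp: divide_le_eq)
qed

lemma dens_upper: "real (card (A \<inter> {M..<M+N})) / real N \<le> dens A N"
  unfolding dens_def by (rule cSUP_upper[OF _ dens_bdd]) simp

lemma dens_least: "(\<And>M. real (card (A \<inter> {M..<M+N})) / real N \<le> c) \<Longrightarrow> dens A N \<le> c"
  unfolding dens_def by (rule cSUP_least) auto

lemma dens_nonneg: "0 \<le> dens A N"
  using dens_upper[of A 0 N] by (smt (verit) divide_nonneg_nonneg of_nat_0_le_iff)

lemma card_split: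
  fixes A :: "nat set"
  shows "card (A \<inter> {M..<M+(m+n)}) = card (A \<inter> {M..<M+m}) + card (A \<inter> {M+m..<(M+m)+n})"
proof -
  have "A \<inter> {M..<M+(m+n)} = (A \<inter> {M..<M+m}) \<union> (A \<inter> {M+m..<(M+m)+n})"
  proof -
    have "{M..<M+m} \<union> {M+m..<(M+m)+n} = {M..<M+(m+n)}"
      using ivl_disj_un_two(3)[of M "M+m" "M+m+n"] by (simp add: add.assoc)
    then show ?thesis by blast
  qed
  moreover have "(A \<inter> {M..<M+m}) \<inter> (A \<inter> {M+m..<(M+m)+n}) = {}" by auto
  ultimately show ?thesis by (simp add: card_Un_disjoint)
qed

lemma card_le_dens: "real (card (A \<inter> {M..<M+N})) \<le> real N * dens A N"
proof (cases "N = 0")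
  case True then show ?thesis by simp
next
  case False
  then show ?thesis using dens_upper[of A M N] by (simp add: field_simps)
qed

lemma dens_convergent: "convergent (dens A)"
proof -
  define a where "a = (\<lambda>n. real n * dens A n)"
  have "convergent (\<lambda>n. a n / real n)"
  proof (rule fekete)
    show "0 \<le> a n" for n unfolding a_def using dens_nonneg by simp
    fix m n
    show "a (m + n) \<le> a m + a n"
    proof (cases "m + n = 0")
      case True then show ?thesis by (simp add: a_def)
    next
      case False
      have "dens A (m + n) \<le> (a m + a n) / real (m + n)"
      proof (rule dens_least)
        fix M
        have "real (card (A \<inter> {M..<M+(m+n)})) \<le> a m + a n"
          unfolding card_split a_def using card_le_dens[of A M m] card_le_dens[of A "M+m" n] by simp
        then show "real (card (A \<inter> {M..<M+(m+n)})) / real (m + n) \<le> (a m + a n) / real (m + n)"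
          by (intro divide_right_mono) auto
      qed
      then show ?thesis using False by (simp add: a_def field_simps)
    qed
  qed
  moreover have "(\<lambda>n. a n / real n) = dens A"
  proof
    fix n show "a n / real n = dens A n"
      by (cases "n = 0") (auto simp: a_def dens_def)
  qed
  ultimately show ?thesis by simp
qed

lemma ubd_eq: "upper_banach_density A = lim (dens A)"
  unfolding upper_banach_density_def dens_def ..

lemma dens_lim: "dens A \<longlonglongrightarrow> upper_banach_density A"
  using dens_convergent[of A] by (simp add: ubd_eq convergent_LIMSEQ_iff)



lemma funpow_in_X: "T ` X \<subseteq> X \<Longrightarrow> x \<in> X \<Longrightarrow> (T ^^ n) x \<in> X"
  by (induction n) auto

lemma closed_in_sets: "closed G \<Longrightarrow> G \<subseteq> X \<Longrightarrow> G \<in> sets (restrict_space borel X)"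
  by (auto simp: sets_restrict_space intro!: image_eqI[where x=G] borel_closed)

lemma ue_closed:
  fixes X :: "'a::metric_space set" and T :: "'a \<Rightarrow> 'a" and \<mu> :: "'a measure"
  assumes tds: "tds X T" and ue: "uniquely_ergodic_with X T \<mu>"
    and F: "closed F" "F \<subseteq> X" and e: "\<epsilon> > 0"
  shows "\<exists>N0. \<forall>n\<ge>N0. \<forall>y\<in>X. real (card {m. m < n \<and> (T ^^ m) y \<in> F}) \<le> (measure \<mu> F + \<epsilon>) * real n"
proof (rule ccontr)
  assume "\<not> ?thesis"
  note neg = this
  have ex1: "\<forall>j. \<exists>n. \<exists>y. n \<ge> Suc j \<and> y \<in> X \<and>
      real (card {m. m < n \<and> (T ^^ m) y \<in> F}) > (measure \<mu> F + \<epsilon>) * real n"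
  proof
    fix j
    from neg have "\<not> (\<forall>n\<ge>Suc j. \<forall>y\<in>X. real (card {m. m < n \<and> (T ^^ m) y \<in> F}) \<le> (measure \<mu> F + \<epsilon>) * real n)"
      by blast
    then obtain n y where "n \<ge> Suc j" "y \<in> X" "\<not> real (card {m. m < n \<and> (T ^^ m) y \<in> F}) \<le> (measure \<mu> F + \<epsilon>) * real n"
      by blast
    then show "\<exists>n. \<exists>y. n \<ge> Suc j \<and> y \<in> X \<and>
      real (card {m. m < n \<and> (T ^^ m) y \<in> F}) > (measure \<mu> F + \<epsilon>) * real n"
      by (intro exI[of _ n] exI[of _ y]) (simp add: not_le)
  qed
  obtain N where exN: "\<forall>j. \<exists>y. N j \<ge> Suc j \<and> y \<in> X \<and>
      real (card {m. m < N j \<and> (T ^^ m) y \<in> F}) > (measure \<mu> F + \<epsilon>) * real (N j)"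
    using choice[OF ex1] by blast
  obtain y where "\<forall>j. N j \<ge> Suc j \<and> y j \<in> X \<and>
      real (card {m. m < N j \<and> (T ^^ m) (y j) \<in> F}) > (measure \<mu> F + \<epsilon>) * real (N j)"
    using choice[OF exN] by blast
  then have Ny: "N j \<ge> Suc j" "y j \<in> X"
    "real (card {m. m < N j \<and> (T ^^ m) (y j) \<in> F}) > (measure \<mu> F + \<epsilon>) * real (N j)" for j
    by auto
  have inv: "invariant_prob X T \<mu>" using ue by (simp add: uniquely_ergodic_with_def)
  then have pm: "prob_space \<mu>" "sets \<mu> = sets (restrict_space borel X)"
    by (auto simp: invariant_prob_def)
  have muF: "measure \<mu> F \<ge> 0" by simp
  have Fne: "F \<noteq> {}"
  proof
    assume "F = {}"
    then have "\<epsilon> * real (N 0) < 0" using Ny(3)[of 0] by simp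
    moreover have "0 \<le> \<epsilon> * real (N 0)" using e by simp
    ultimately show False by linarith
  qed
  interpret K: kb X T y N
  proof
    show "compact X" "continuous_on X T" using tds by (auto simp: tds_def)
    show "X \<noteq> {}" using Ny(2) by blast
    show "T ` X \<subseteq> X" using tds by (auto simp: tds_def)
    show "y j \<in> X" for j by (rule Ny(2))
    show "N j > 0" for j using Ny(1)[of j] by simp
    show "filterlim N at_top sequentially"
      by (rule filterlim_at_top_mono[OF filterlim_ident]) (rule always_eventually, use Ny(1) Suc_leD in blast)
  qed
  obtain \<nu> r where \<nu>: "invariant_prob X T \<nu>" "strict_mono r"
    "\<And>h. continuous_on X h \<Longrightarrow> (\<lambda>j. K.avg (r j) h) \<longlonglongrightarrow> integral\<^sup>L \<nu> h"
    using K.kb_main by blast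
  have nu_mu: "\<nu> = \<mu>" using ue \<nu>(1) by (simp add: uniquely_ergodic_with_def)
  have ge: "measure \<mu> F + \<epsilon> \<le> integral\<^sup>L \<nu> (gfun F m)" for m
  proof (rule LIMSEQ_le_const[OF \<nu>(3)[OF gfun_cont]], intro exI allI impI)
    fix j :: nat
    have "K.avg (r j) (indicator F) \<le> K.avg (r j) (gfun F m)"
      unfolding K.avg_def using K.Npos[of "r j"]
      by (intro divide_right_mono sum_mono gfun_ge_ind) auto
    moreover have "K.avg (r j) (indicator F) = real (card {m. m < N (r j) \<and> (T ^^ m) (y (r j)) \<in> F}) / real (N (r j))"
      unfolding K.avg_def sum_ind_card ..
    moreover have "measure \<mu> F + \<epsilon> < real (card {m. m < N (r j) \<and> (T ^^ m) (y (r j)) \<in> F}) / real (N (r j))"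
      using Ny(3)[of "r j"] K.Npos[of "r j"] by (simp add: field_simps)
    ultimately show "measure \<mu> F + \<epsilon> \<le> K.avg (r j) (gfun F m)" by simp
  qed
  have "(\<lambda>m. integral\<^sup>L \<nu> (gfun F m)) \<longlonglongrightarrow> measure \<nu> F"
  proof (rule closed_approx[OF _ _ F Fne])
    show "finite_measure \<nu>" using \<nu>(1) unfolding invariant_prob_def prob_space_def by blast
    show "sets \<nu> = sets (restrict_space borel X)" using \<nu>(1) unfolding invariant_prob_def by blast
  qed
  then have "measure \<mu> F + \<epsilon> \<le> measure \<nu> F" by (rule LIMSEQ_le_const) (use ge in auto)
  then show False using nu_mu e by simp
qed



lemma window_card:
  "card ({k. (T ^^ k) x0 \<in> G} \<inter> {M..<M+n}) = card {m. m < n \<and> (T ^^ m) ((T ^^ M) x0) \<in> G}"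
proof -
  have "{k. (T ^^ k) x0 \<in> G} \<inter> {M..<M+n} = (\<lambda>m. m + M) ` {m. m < n \<and> (T ^^ m) ((T ^^ M) x0) \<in> G}"
  proof (rule set_eqI, rule iffI)
    fix k assume k: "k \<in> {k. (T ^^ k) x0 \<in> G} \<inter> {M..<M+n}"
    then have k': "(T ^^ k) x0 \<in> G" "M \<le> k" "k < M + n" by auto
    have "(T ^^ (k - M)) ((T ^^ M) x0) = (T ^^ (k - M + M)) x0" by (simp add: funpow_add)
    also have "k - M + M = k" using k' by simp
    finally have "k = (k - M) + M" "k - M < n" "(T ^^ (k - M)) ((T ^^ M) x0) \<in> G"
      using k' by auto
    then show "k \<in> (\<lambda>m. m + M) ` {m. m < n \<and> (T ^^ m) ((T ^^ M) x0) \<in> G}" by blast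
  next
    fix k assume "k \<in> (\<lambda>m. m + M) ` {m. m < n \<and> (T ^^ m) ((T ^^ M) x0) \<in> G}"
    then obtain m where "k = m + M" "m < n" "(T ^^ m) ((T ^^ M) x0) \<in> G" by auto
    then show "k \<in> {k. (T ^^ k) x0 \<in> G} \<inter> {M..<M+n}" by (auto simp: funpow_add)
  qed
  then show ?thesis by (simp add: card_image inj_on_def)
qed

lemma cont_funpow: "continuous_on X T \<Longrightarrow> T ` X \<subseteq> X \<Longrightarrow> continuous_on X (T ^^ n)"
proof (induction n)
  case 0 then show ?case by (simp add: continuous_on_id)
next
  case (Suc n)
  have "(T ^^ n) ` X \<subseteq> X" using funpow_in_X[OF Suc.prems(2)] by auto
  then have "continuous_on X (T \<circ> (T ^^ n))"
    using Suc by (intro continuous_on_compose continuous_on_subset[OF Suc.prems(1)]) auto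
  then show ?case by simp
qed



theorem mainTheorem3:
  fixes X :: "'a::metric_space set" and T :: "'a \<Rightarrow> 'a" and \<mu> :: "'a measure"
    and U :: "'a set" and x0 :: 'a
  assumes "tds X T"
    and "uniquely_ergodic_with X T \<mu>"
    and "mixing \<mu> T"
    and "openin (top_of_set X) U" and "U \<subseteq> X"
    and "0 < measure \<mu> U" and "measure \<mu> (closure U) < 1"
    and "x0 \<in> X"
  shows "upper_banach_density {n. (T ^^ n) x0 \<in> U} > 0 \<and>
    \<not> (\<exists>B C. upper_banach_density B > 0 \<and> infinite C \<and>
          sumset B C \<subseteq> {n. (T ^^ n) x0 \<in> U})"
proof -
  note tds = assms(1) and ue = assms(2) and mix = assms(3) and Uo = assms(4) and UX = assms(5)
    and Upos = assms(6) and Ucl = assms(7) and x0 = assms(8)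
  have cX: "compact X" and cT: "continuous_on X T" and TX: "T ` X \<subseteq> X"
    using tds by (auto simp: tds_def)
  have clX: "closed X" using cX by (rule compact_imp_closed)
  have inv: "invariant_prob X T \<mu>" using ue by (simp add: uniquely_ergodic_with_def)
  then have pm: "prob_space \<mu>" and sm: "sets \<mu> = sets (restrict_space borel X)" and spm: "space \<mu> = X"
    by (auto simp: invariant_prob_def)
  interpret prob_space \<mu> by (rule pm)
  have orb: "(T ^^ n) x \<in> X" if "x \<in> X" for x n using funpow_in_X[OF TX that] .
  have cl_sets: "G \<in> sets \<mu>" if "closed G" "G \<subseteq> X" for G
    using closed_in_sets[OF that] sm by simp
  have mX: "measure \<mu> X = 1" using prob_space spm by simp
  have part1: "upper_banach_density {n. (T ^^ n) x0 \<in> U} > 0"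
  proof -
    obtain V where V: "open V" "U = X \<inter> V" using Uo by (auto simp: openin_open)
    define Fc where "Fc = X - U"
    have "Fc = X \<inter> - V" using V(2) by (auto simp: Fc_def)
    then have Fc: "closed Fc" "Fc \<subseteq> X" using V(1) clX by (auto intro!: closed_Int closed_Compl)
    have Usets: "U \<in> sets \<mu>" using V sm by (auto simp: sets_restrict_space intro!: image_eqI[where x=V] borel_open)
    have Xsets: "X \<in> sets \<mu>" using spm sets.top by metis
    have mFc: "measure \<mu> Fc = 1 - measure \<mu> U"
      unfolding Fc_def using finite_measure_Diff[OF Xsets Usets UX] mX by simp
    obtain N0 where N0: "\<And>n y. n \<ge> N0 \<Longrightarrow> y \<in> X \<Longrightarrow>
        real (card {m. m < n \<and> (T ^^ m) y \<in> Fc}) \<le> (measure \<mu> Fc + measure \<mu> U / 2) * real n"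
      using ue_closed[OF tds ue Fc, of "measure \<mu> U / 2"] Upos by auto
    have lb: "measure \<mu> U / 2 \<le> dens {n. (T ^^ n) x0 \<in> U} n" if n: "n \<ge> max N0 1" for n
    proof -
      have part: "{m. m < n \<and> (T ^^ m) x0 \<in> U} \<union> {m. m < n \<and> (T ^^ m) x0 \<in> Fc} = {..<n}"
        using orb[OF x0] by (auto simp: Fc_def)
      have disj: "{m. m < n \<and> (T ^^ m) x0 \<in> U} \<inter> {m. m < n \<and> (T ^^ m) x0 \<in> Fc} = {}"
        by (auto simp: Fc_def)
      have "card {m. m < n \<and> (T ^^ m) x0 \<in> U} + card {m. m < n \<and> (T ^^ m) x0 \<in> Fc} = n"
        using card_Un_disjoint[of "{m. m < n \<and> (T ^^ m) x0 \<in> U}" "{m. m < n \<and> (T ^^ m) x0 \<in> Fc}"] part disj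
        by simp
      then have "real (card {m. m < n \<and> (T ^^ m) x0 \<in> U}) = real n - real (card {m. m < n \<and> (T ^^ m) x0 \<in> Fc})"
        by linarith
      also have "\<dots> \<ge> real n - (1 - measure \<mu> U + measure \<mu> U / 2) * real n"
        using N0[of n x0] n x0 mFc by simp
      finally have c: "real (card {m. m < n \<and> (T ^^ m) x0 \<in> U}) \<ge> measure \<mu> U / 2 * real n"
        by (simp add: algebra_simps)
      have e1: "real (card ({k. (T ^^ k) x0 \<in> U} \<inter> {0..<0+n})) / real n \<le> dens {n. (T ^^ n) x0 \<in> U} n"
        by (rule dens_upper)
      have e2: "card ({k. (T ^^ k) x0 \<in> U} \<inter> {0..<0+n}) = card {m. m < n \<and> (T ^^ m) x0 \<in> U}"
        using window_card[of T x0 U 0 n] by simp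
      have e3: "measure \<mu> U / 2 \<le> real (card {m. m < n \<and> (T ^^ m) x0 \<in> U}) / real n"
        using c n by (simp add: field_simps)
      from e1 have "real (card {m. m < n \<and> (T ^^ m) x0 \<in> U}) / real n \<le> dens {n. (T ^^ n) x0 \<in> U} n"
        by (simp only: e2)
      with e3 show ?thesis by linarith
    qed
    have "measure \<mu> U / 2 \<le> upper_banach_density {n. (T ^^ n) x0 \<in> U}"
      by (rule LIMSEQ_le_const[OF dens_lim]) (use lb in blast)
    then show ?thesis using Upos by simp
  qed
  have part2: "\<not> (\<exists>B C. upper_banach_density B > 0 \<and> infinite C \<and> sumset B C \<subseteq> {n. (T ^^ n) x0 \<in> U})"
  proof
    assume "\<exists>B C. upper_banach_density B > 0 \<and> infinite C \<and> sumset B C \<subseteq> {n. (T ^^ n) x0 \<in> U}"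
    then obtain B C where B: "upper_banach_density B > 0" and C: "infinite C"
      and BC: "sumset B C \<subseteq> {n. (T ^^ n) x0 \<in> U}" by blast
    define \<beta> where "\<beta> = upper_banach_density B"
    define F where "F = closure U"
    have F: "closed F" "F \<subseteq> X" "U \<subseteq> F"
      using closure_minimal[OF UX clX] by (auto simp: F_def closure_subset)
    define a where "a = measure \<mu> F"
    have a: "0 \<le> a" "a < 1" using Ucl by (auto simp: a_def F_def)
    define \<eta> where "\<eta> = (1 - a) * \<beta> / 4"
    have \<beta>: "\<beta> > 0" using B by (simp add: \<beta>_def)
    have \<eta>: "\<eta> > 0" using a \<beta> by (simp add: \<eta>_def)
    have \<eta>a: "\<eta> / (1 - a) = \<beta> / 4"
    proof -
      have "1 - a \<noteq> 0" using a by simp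
      then show ?thesis unfolding \<eta>_def by (simp add: field_simps)
    qed
    have Fs: "F \<in> sets \<mu>" using cl_sets F by simp
    have mixF: "(\<lambda>n. measure \<mu> (G \<inter> ((T ^^ n) -` F \<inter> X))) \<longlonglongrightarrow> measure \<mu> G * a" if "G \<in> sets \<mu>" for G
      using mix that Fs spm unfolding mixing_def a_def by auto
    have claim: "\<exists>G. closed G \<and> G \<subseteq> X \<and> (\<forall>b\<in>B. (T ^^ b) x0 \<in> G) \<and> measure \<mu> G \<le> a ^ k + \<eta> / (1 - a)" for k
    proof (induction k)
      case 0
      have "measure \<mu> X \<le> a ^ 0 + \<eta> / (1 - a)" using mX \<eta> a by simp
      then show ?case using clX orb[OF x0] by blast
    next
      case (Suc k)
      then obtain G where G: "closed G" "G \<subseteq> X" "\<forall>b\<in>B. (T ^^ b) x0 \<in> G"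
        "measure \<mu> G \<le> a ^ k + \<eta> / (1 - a)" by blast
      have Gs: "G \<in> sets \<mu>" using cl_sets G by simp
      obtain n0 where n0: "\<And>n. n \<ge> n0 \<Longrightarrow> dist (measure \<mu> (G \<inter> ((T ^^ n) -` F \<inter> X))) (measure \<mu> G * a) < \<eta>"
        using mixF[OF Gs] \<eta> unfolding lim_sequentially by blast
      obtain c where c: "c \<in> C" "c \<ge> n0" using C unfolding infinite_nat_iff_unbounded_le by blast
      define G' where "G' = G \<inter> ((T ^^ c) -` F \<inter> X)"
      have "closed (X \<inter> (T ^^ c) -` F)"
        by (rule continuous_closed_preimage[OF cont_funpow[OF cT TX] clX F(1)])
      then have cG': "closed G'" using G(1) unfolding G'_def by (simp add: Int_commute Int_left_commute closed_Int)
      have G'X: "G' \<subseteq> X" using G(2) by (auto simp: G'_def)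
      have G'b: "\<forall>b\<in>B. (T ^^ b) x0 \<in> G'"
      proof
        fix b assume b: "b \<in> B"
        have "b + c \<in> sumset B C" using b c(1) unfolding sumset_def by blast
        then have "(T ^^ (b + c)) x0 \<in> U" using BC by auto
        moreover have "(T ^^ (b + c)) x0 = (T ^^ c) ((T ^^ b) x0)"
          by (simp add: add.commute[of b c] funpow_add)
        ultimately have "(T ^^ c) ((T ^^ b) x0) \<in> F" using F(3) by auto
        then show "(T ^^ b) x0 \<in> G'" using G(3) b orb[OF x0] by (auto simp: G'_def)
      qed
      have "measure \<mu> G' < measure \<mu> G * a + \<eta>"
        using n0[OF c(2)] by (simp add: G'_def dist_real_def abs_less_iff)
      also have "\<dots> \<le> (a ^ k + \<eta> / (1 - a)) * a + \<eta>"
        using G(4) a by (intro add_right_mono mult_right_mono) auto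
      also have "\<dots> = a ^ Suc k + \<eta> / (1 - a)"
        using a by (simp add: field_simps)
      finally show ?case using cG' G'X G'b by (intro exI[of _ G']) auto
    qed
    have lim0: "(\<lambda>k. a ^ k) \<longlonglongrightarrow> 0" using a by (intro LIMSEQ_power_zero) simp
    have b4: "\<beta> / 4 > 0" using \<beta> by simp
    obtain no where no: "\<forall>n\<ge>no. dist (a ^ n) 0 < \<beta> / 4"
      using lim0[unfolded lim_sequentially, rule_format, OF b4] by blast
    define k where "k = no"
    have "dist (a ^ k) 0 < \<beta> / 4" using no by (simp add: k_def)
    then have k: "a ^ k < \<beta> / 4" using a by (simp add: dist_real_def)
    obtain G where G: "closed G" "G \<subseteq> X" "\<forall>b\<in>B. (T ^^ b) x0 \<in> G"
      "measure \<mu> G \<le> a ^ k + \<eta> / (1 - a)" using claim by blast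
    have mG: "measure \<mu> G \<le> \<beta> / 2" using G(4) k \<eta>a by simp
    obtain N0 where N0: "\<And>n y. n \<ge> N0 \<Longrightarrow> y \<in> X \<Longrightarrow>
        real (card {m. m < n \<and> (T ^^ m) y \<in> G}) \<le> (measure \<mu> G + \<beta> / 4) * real n"
      using ue_closed[OF tds ue G(1,2), of "\<beta> / 4"] \<beta> by auto
    have ub: "dens B n \<le> 3 * \<beta> / 4" if n: "n \<ge> max N0 1" for n
    proof (rule dens_least)
      fix M
      have "B \<inter> {M..<M+n} \<subseteq> {k. (T ^^ k) x0 \<in> G} \<inter> {M..<M+n}" using G(3) by auto
      then have "card (B \<inter> {M..<M+n}) \<le> card ({k. (T ^^ k) x0 \<in> G} \<inter> {M..<M+n})"
        by (intro card_mono) auto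
      also have "\<dots> = card {m. m < n \<and> (T ^^ m) ((T ^^ M) x0) \<in> G}" by (rule window_card)
      finally have "real (card (B \<inter> {M..<M+n})) \<le> (measure \<mu> G + \<beta> / 4) * real n"
        using N0[of n "(T ^^ M) x0"] n orb[OF x0] by simp
      also have "\<dots> \<le> (3 * \<beta> / 4) * real n" using mG by (intro mult_right_mono) auto
      finally show "real (card (B \<inter> {M..<M+n})) / real n \<le> 3 * \<beta> / 4"
        using n by (simp add: divide_le_eq)
    qed
    have "\<exists>N. \<forall>n\<ge>N. dens B n \<le> 3 * \<beta> / 4" using ub by blast
    then have "upper_banach_density B \<le> 3 * \<beta> / 4" by (rule LIMSEQ_le_const2[OF dens_lim])
    then have "\<beta> \<le> 3 * \<beta> / 4" by (simp add: \<beta>_def)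
    then show False using \<beta> by simp
  qed
  show ?thesis using part1 part2 by blast
qed


end
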